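(* $\mathrm{Win}_\mathcal{A} \equiv_W \mathrm{LPO}$.
   Context: Weihrauch reducibility: for partial multivalued maps $f,g$ between represented spaces (spaces $(X,\delta_X)$ with $\delta_X:\subseteq\mathbb{N}^\mathbb{N}\to X$ a partial surjection), $f\leq_W g$ iff there are computable partial $K,H:\subseteq\mathbb{N}^\mathbb{N}\to\mathbb{N}^\mathbb{N}$ such that for every realizer $G$ of $g$, $p\mapsto K(\langle p,G(H(p))\rangle)$ realizes $f$ (a realizer $F$ of $f:X\rightrightarrows Y$ satisfies $\delta_Y(F(p))\in f(\delta_X(p))$ for $\delta_X(p)\in\mathrm{dom}(f)$); $\equiv_W$ is the induced equivalence. $\mathrm{LPO}:\{0,1\}^\mathbb{N}\to\{0,1\}$ maps $p$ to $1$ iff $p=0^\mathbb{N}$. $\mathcal{A}$ denotes the closed subsets of $\{0,1\}^\mathbb{N}$, a closed set being named by an enumeration of words $w$ with $\bigcup w\{0,1\}^\mathbb{N}$ equal to its complement. Games: a win/lose game has two players 1 and 2, choices $\{0,1\}$, a turn function $d:\{0,1\}^*\to\{1,2\}$ (given as lookup table) and a winning set for player 1 (player 2 wins on the complement); a strategy of a player is a function from the histories $d^{-1}(i)$ to $\{0,1\}$, and it is winning if every play consistent with it is won by that player. $\mathrm{Win}_\Gamma$ takes a win/lose game whose winning set for player 1 is given by a $\Gamma$-name and outputs which player has a winning strategy. *)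

theory Defs
  imports Main "HOL-Library.Nat_Bijection"
begin

type_synonym baire = "nat \<Rightarrow> nat"

text \<open>A representation of (a subset of) a type: a partial map from Baire space;
  the represented space is its range.\<close>
type_synonym 'a rep = "baire \<Rightarrow> 'a option"

definition pair :: "baire \<Rightarrow> baire \<Rightarrow> baire" where
  "pair p q = (\<lambda>n. if even n then p (n div 2) else q (n div 2))"

definition fst_b :: "baire \<Rightarrow> baire" where "fst_b r = (\<lambda>n. r (2 * n))"
definition snd_b :: "baire \<Rightarrow> baire" where "snd_b r = (\<lambda>n. r (2 * n + 1))"

datatype prcode = Zero | Succ | Proj nat | Comp prcode "prcode list" | Prim prcode prcode

definition arg :: "nat \<Rightarrow> nat list \<Rightarrow> nat" where
  "arg i xs = (if i < length xs then xs ! i else 0)"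

fun eval :: "prcode \<Rightarrow> nat list \<Rightarrow> nat" where
  "eval Zero xs = 0"
| "eval Succ xs = Suc (arg 0 xs)"
| "eval (Proj i) xs = arg i xs"
| "eval (Comp f gs) xs = eval f (map (\<lambda>g. eval g xs) gs)"
| "eval (Prim f g) [] = eval f []"
| "eval (Prim f g) (0 # xs) = eval f xs"
| "eval (Prim f g) (Suc m # xs) = eval g (eval (Prim f g) (m # xs) # m # xs)"

text \<open>Standard characterisation: F is computable iff it is (a restriction of) the
  supremum of a primitive recursive word function: for every input p in the domain and
  every output position n, the PR function c, applied to n and (the code of) finite
  prefixes of p, eventually answers Suc (F p n) and never answers anything else than
  0 (= "no answer yet") or Suc (F p n).\<close>
definition prefix_code :: "baire \<Rightarrow> nat \<Rightarrow> nat" where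
  "prefix_code p k = list_encode (map p [0..<k])"

definition computable :: "(baire \<Rightarrow> baire option) \<Rightarrow> bool" where
  "computable F \<longleftrightarrow> (\<exists>c. \<forall>p q. F p = Some q \<longrightarrow> (\<forall>n.
      (\<exists>k. eval c [n, prefix_code p k] \<noteq> 0) \<and>
      (\<forall>k. eval c [n, prefix_code p k] \<noteq> 0 \<longrightarrow> eval c [n, prefix_code p k] = Suc (q n))))"

text \<open>A partial multivalued map X \<rightrightarrows> Y is a function to sets; its domain is the set of
  points with nonempty value.\<close>
definition realizes :: "'a rep \<Rightarrow> 'b rep \<Rightarrow> ('a \<Rightarrow> 'b set) \<Rightarrow> (baire \<Rightarrow> baire option) \<Rightarrow> bool" where
  "realizes \<delta>X \<delta>Y f F \<longleftrightarrow>
     (\<forall>p x. \<delta>X p = Some x \<and> f x \<noteq> {} \<longrightarrow> (\<exists>q y. F p = Some q \<and> \<delta>Y q = Some y \<and> y \<in> f x))"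

definition weihrauch_le ::
  "'a rep \<Rightarrow> 'b rep \<Rightarrow> ('a \<Rightarrow> 'b set) \<Rightarrow> 'c rep \<Rightarrow> 'd rep \<Rightarrow> ('c \<Rightarrow> 'd set) \<Rightarrow> bool" where
  "weihrauch_le \<delta>X \<delta>Y f \<delta>Z \<delta>W g \<longleftrightarrow>
     (\<exists>K H. computable K \<and> computable H \<and>
        (\<forall>G. realizes \<delta>Z \<delta>W g G \<longrightarrow>
           realizes \<delta>X \<delta>Y f (\<lambda>p. Option.bind (H p) (\<lambda>h. Option.bind (G h) (\<lambda>r. K (pair p r))))))"

definition weihrauch_equiv ::
  "'a rep \<Rightarrow> 'b rep \<Rightarrow> ('a \<Rightarrow> 'b set) \<Rightarrow> 'c rep \<Rightarrow> 'd rep \<Rightarrow> ('c \<Rightarrow> 'd set) \<Rightarrow> bool" where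
  "weihrauch_equiv \<delta>X \<delta>Y f \<delta>Z \<delta>W g \<longleftrightarrow>
     weihrauch_le \<delta>X \<delta>Y f \<delta>Z \<delta>W g \<and> weihrauch_le \<delta>Z \<delta>W g \<delta>X \<delta>Y f"

text \<open>Cantor space {0,1}^N as a subspace of Baire space (identity representation).\<close>
definition cantor_rep :: "baire rep" where
  "cantor_rep p = (if \<forall>n. p n \<le> 1 then Some p else None)"

text \<open>{0,1} (and {1,2}) represented by the first entry of a name.\<close>
definition bit_rep :: "nat rep" where
  "bit_rep p = (if p 0 \<le> 1 then Some (p 0) else None)"

definition LPO :: "baire \<Rightarrow> nat set" where
  "LPO p = {if p = (\<lambda>_. 0) then 1 else 0}"

text \<open>Bijective coding of binary words by natural numbers.\<close>
fun bw_encode :: "bool list \<Rightarrow> nat" where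
  "bw_encode [] = 0"
| "bw_encode (b # w) = Suc ((if b then 1 else 0) + 2 * bw_encode w)"

definition cyl :: "bool list \<Rightarrow> (nat \<Rightarrow> bool) set" where
  "cyl w = {x. \<forall>i < length w. x i = w ! i}"

text \<open>A name a enumerates words: a n = 0 means "no word", a n = Suc (code w) means w.
  It names the closed set whose complement is the union of the enumerated cylinders.\<close>
definition closed_named :: "baire \<Rightarrow> (nat \<Rightarrow> bool) set" where
  "closed_named a = - (\<Union> {cyl w | w. \<exists>n. a n = Suc (bw_encode w)})"

text \<open>A game: turn function d : {0,1}* \<rightarrow> {1,2} and winning set for player 1.\<close>
type_synonym game = "(bool list \<Rightarrow> nat) \<times> (nat \<Rightarrow> bool) set"

text \<open>Name of a game: pair of a lookup table t (t (code w) = d w) and an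
  \<A>-name of the winning set of player 1.\<close>
definition closed_game_rep :: "game rep" where
  "closed_game_rep r =
     (if \<forall>w. fst_b r (bw_encode w) \<in> {1, 2}
      then Some (\<lambda>w. fst_b r (bw_encode w), closed_named (snd_b r)) else None)"

definition prefix :: "(nat \<Rightarrow> bool) \<Rightarrow> nat \<Rightarrow> bool list" where
  "prefix x n = map x [0..<n]"

text \<open>A strategy of player i is a function on histories (only its values on d^{-1}(i) matter).\<close>
definition consistent :: "(bool list \<Rightarrow> nat) \<Rightarrow> nat \<Rightarrow> (bool list \<Rightarrow> bool) \<Rightarrow> (nat \<Rightarrow> bool) \<Rightarrow> bool" where
  "consistent d i \<sigma> x \<longleftrightarrow> (\<forall>n. d (prefix x n) = i \<longrightarrow> x n = \<sigma> (prefix x n))"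

definition winning_strategy :: "game \<Rightarrow> nat \<Rightarrow> (bool list \<Rightarrow> bool) \<Rightarrow> bool" where
  "winning_strategy G i \<sigma> \<longleftrightarrow>
     (\<forall>x. consistent (fst G) i \<sigma> x \<longrightarrow> (if i = 1 then x \<in> snd G else x \<notin> snd G))"

definition Win :: "game \<Rightarrow> nat set" where
  "Win G = {i \<in> {1, 2}. \<exists>\<sigma>. winning_strategy G i \<sigma>}"

definition player_rep :: "nat rep" where
  "player_rep p = (if p 0 \<in> {1, 2} then Some (p 0) else None)"

end

theory Submission
  imports Defs
begin


definition env :: "nat \<Rightarrow> nat list \<Rightarrow> nat list" where
  "env n xs = map (\<lambda>i. arg i xs) [0..<n]"

definition pr :: "nat \<Rightarrow> (nat list \<Rightarrow> nat) \<Rightarrow> bool" where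
  "pr n f \<longleftrightarrow> (\<exists>c. \<forall>xs. eval c xs = f (env n xs))"

lemma length_env[simp]: "length (env n xs) = n"
  by (simp add: env_def)

lemma arg_env[simp]: "arg i (env n xs) = (if i < n then arg i xs else 0)"
  by (simp add: env_def arg_def)

lemma env_id: "length xs = n \<Longrightarrow> env n xs = xs"
  by (auto simp: env_def arg_def intro: nth_equalityI)

lemma arg_tl: "arg i (tl xs) = arg (Suc i) xs"
  by (cases xs) (auto simp: arg_def)

lemma arg_drop: "arg i (drop k xs) = arg (i + k) xs"
  by (auto simp: arg_def add.commute)

lemma pr_cong: "pr n f \<Longrightarrow> (\<And>xs. length xs = n \<Longrightarrow> f xs = g xs) \<Longrightarrow> pr n g"
  unfolding pr_def by (metis length_env)

fun constcode :: "nat \<Rightarrow> prcode" where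
  "constcode 0 = Zero"
| "constcode (Suc k) = Comp Succ [constcode k]"

lemma eval_constcode: "eval (constcode k) xs = k"
  by (induction k) (auto simp: arg_def)

lemma pr_const: "pr n (\<lambda>_. k)"
  unfolding pr_def using eval_constcode by blast

lemma pr_arg: "i < n \<Longrightarrow> pr n (\<lambda>xs. arg i xs)"
  unfolding pr_def by (rule exI[of _ "Proj i"]) simp

lemma pr_comp:
  assumes g: "pr m g" and fs: "\<forall>i<m. pr n (fs i)"
  shows "pr n (\<lambda>xs. g (map (\<lambda>i. fs i xs) [0..<m]))"
proof -
  obtain cg where cg: "\<And>xs. eval cg xs = g (env m xs)" using g unfolding pr_def by blast
  have "\<forall>i<m. \<exists>c. \<forall>xs. eval c xs = fs i (env n xs)" using fs unfolding pr_def by blast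
  then obtain C where C: "\<And>i xs. i < m \<Longrightarrow> eval (C i) xs = fs i (env n xs)" by metis
  have "eval (Comp cg (map C [0..<m])) xs = g (map (\<lambda>i. fs i (env n xs)) [0..<m])" for xs
  proof -
    have "map (\<lambda>c. eval c xs) (map C [0..<m]) = map (\<lambda>i. fs i (env n xs)) [0..<m]"
      unfolding map_map by (rule map_cong) (auto simp: C)
    then show ?thesis by (simp only: eval.simps cg) (metis env_id length_map diff_zero length_upt)
  qed
  then show ?thesis unfolding pr_def by blast
qed

lemma pr_comp1:
  assumes "pr 1 g" "pr n f" shows "pr n (\<lambda>xs. g [f xs])"
  using pr_comp[of 1 g n "\<lambda>_. f"] assms by simp

lemma pr_comp2:
  assumes "pr 2 g" "pr n f1" "pr n f2" shows "pr n (\<lambda>xs. g [f1 xs, f2 xs])"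
proof -
  have "pr n (\<lambda>xs. g (map (\<lambda>i. (\<lambda>i. if i = 0 then f1 else f2) i xs) [0..<2]))"
    using assms by (intro pr_comp) (auto simp: less_2_cases_iff)
  then show ?thesis by (simp add: upt_rec)
qed

lemma pr_comp3:
  assumes "pr 3 g" "pr n f1" "pr n f2" "pr n f3" shows "pr n (\<lambda>xs. g [f1 xs, f2 xs, f3 xs])"
proof -
  have "pr n (\<lambda>xs. g (map (\<lambda>i. (\<lambda>i. if i = 0 then f1 else if i = 1 then f2 else f3) i xs) [0..<3]))"
    using assms by (intro pr_comp) auto
  then show ?thesis by (simp add: upt_rec)
qed

lemma lift1:
  assumes "pr 1 (\<lambda>ys. h (arg 0 ys))" "pr n f" shows "pr n (\<lambda>xs. h (f xs))"
  using pr_comp1[OF assms] by (simp add: arg_def)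

lemma lift2:
  assumes "pr 2 (\<lambda>ys. h (arg 0 ys) (arg 1 ys))" "pr n f" "pr n g" shows "pr n (\<lambda>xs. h (f xs) (g xs))"
  using pr_comp2[OF assms] by (simp add: arg_def)

lemma lift3:
  assumes "pr 3 (\<lambda>ys. h (arg 0 ys) (arg 1 ys) (arg 2 ys))" "pr n f" "pr n g" "pr n k"
  shows "pr n (\<lambda>xs. h (f xs) (g xs) (k xs))"
  using pr_comp3[OF assms] by (simp add: arg_def)

fun natrec :: "nat \<Rightarrow> (nat \<Rightarrow> nat \<Rightarrow> nat) \<Rightarrow> nat \<Rightarrow> nat" where
  "natrec z s 0 = z"
| "natrec z s (Suc m) = s m (natrec z s m)"

lemma pr_natrec:
  assumes z: "pr n z" and s: "pr (Suc (Suc n)) (\<lambda>ys. s (arg 0 ys) (arg 1 ys) (drop 2 ys))"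
    and b: "pr n b"
  shows "pr n (\<lambda>xs. natrec (z xs) (\<lambda>m v. s m v xs) (b xs))"
proof -
  obtain cz where cz: "\<And>xs. eval cz xs = z (env n xs)" using z unfolding pr_def by blast
  obtain cs where cs: "\<And>xs. eval cs xs = s (arg 0 (env (Suc (Suc n)) xs)) (arg 1 (env (Suc (Suc n)) xs)) (drop 2 (env (Suc (Suc n)) xs))"
    using s unfolding pr_def by blast
  obtain cb where cb: "\<And>xs. eval cb xs = b (env n xs)" using b unfolding pr_def by blast
  define cs' where "cs' = Comp cs (Proj 1 # Proj 0 # map (\<lambda>i. Proj (i+2)) [0..<n])"
  have rec: "eval (Prim cz cs') (m # ys) = natrec (z ys) (\<lambda>m v. s m v ys) m" if "length ys = n" for m ys
  proof (induction m)
    case 0 then show ?case using that by (simp add: cz env_id)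
  next
    case (Suc m)
    have l: "map ((\<lambda>g. eval g (v # m # ys)) \<circ> (\<lambda>i. Proj (Suc (Suc i)))) [0..<n] = ys" for v
      using that by (auto simp: arg_def intro: nth_equalityI)
    have "eval cs' (v # m # ys) = s m v ys" for v
      unfolding cs'_def using that
      by (simp add: cs l env_id arg_def del: upt_Suc)
    then show ?case using Suc by simp
  qed
  have "eval (Comp (Prim cz cs') (cb # map Proj [0..<n])) xs = natrec (z (env n xs)) (\<lambda>m v. s m v (env n xs)) (b (env n xs))" for xs
  proof -
    have "map (\<lambda>c. eval c xs) (map Proj [0..<n]) = env n xs" by (simp add: env_def)
    then show ?thesis by (simp add: cb rec)
  qed
  then show ?thesis unfolding pr_def by blast
qed




lemma pr_Suc: "pr n f \<Longrightarrow> pr n (\<lambda>xs. Suc (f xs))"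
proof -
  have "pr 1 (\<lambda>ys. Suc (arg 0 ys))" unfolding pr_def by (rule exI[of _ Succ]) simp
  then show "pr n f \<Longrightarrow> pr n (\<lambda>xs. Suc (f xs))" by (rule lift1)
qed

lemma natrec_add: "natrec a (\<lambda>m v. Suc v) b = a + b" by (induction b) auto
lemma natrec_diff: "natrec a (\<lambda>m v. v - 1) b = a - b" by (induction b) auto
lemma natrec_pred: "natrec 0 (\<lambda>m v. m) b = b - 1" by (induction b) auto
lemma natrec_mult: "natrec 0 (\<lambda>m v. v + a) b = b * a" by (induction b) auto
lemma natrec_ifz: "natrec a (\<lambda>m v. b) c = (if c = 0 then a else b)" by (cases c) auto
lemma natrec_pow: "natrec 1 (\<lambda>m v. v + v) b = 2 ^ b" by (induction b) auto

lemma pr_add: "pr n f \<Longrightarrow> pr n g \<Longrightarrow> pr n (\<lambda>xs. f xs + g xs)"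
proof -
  have "pr 2 (\<lambda>xs. natrec (arg 0 xs) (\<lambda>m v. Suc v) (arg 1 xs))"
    by (rule pr_natrec) (rule pr_Suc pr_arg pr_const | simp add: arg_drop)+
  then have "pr 2 (\<lambda>ys. arg 0 ys + arg 1 ys)" by (rule pr_cong) (simp only: natrec_add)
  then show "pr n f \<Longrightarrow> pr n g \<Longrightarrow> pr n (\<lambda>xs. f xs + g xs)" by (rule lift2)
qed

lemma pr_pred: "pr n f \<Longrightarrow> pr n (\<lambda>xs. f xs - 1)"
proof -
  have "pr 1 (\<lambda>xs. natrec 0 (\<lambda>m v. m) (arg 0 xs))"
    by (rule pr_natrec) (rule pr_Suc pr_arg pr_const | simp add: arg_drop)+
  then have "pr 1 (\<lambda>ys. arg 0 ys - 1)" by (rule pr_cong) (simp only: natrec_pred)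
  then show "pr n f \<Longrightarrow> pr n (\<lambda>xs. f xs - 1)" by (rule lift1)
qed

lemma pr_diff: "pr n f \<Longrightarrow> pr n g \<Longrightarrow> pr n (\<lambda>xs. f xs - g xs)"
proof -
  have "pr 2 (\<lambda>xs. natrec (arg 0 xs) (\<lambda>m v. v - 1) (arg 1 xs))"
    by (rule pr_natrec) (rule pr_pred pr_arg pr_const | simp add: arg_drop)+
  then have "pr 2 (\<lambda>ys. arg 0 ys - arg 1 ys)" by (rule pr_cong) (simp only: natrec_diff)
  then show "pr n f \<Longrightarrow> pr n g \<Longrightarrow> pr n (\<lambda>xs. f xs - g xs)" by (rule lift2)
qed

lemma pr_mult: "pr n f \<Longrightarrow> pr n g \<Longrightarrow> pr n (\<lambda>xs. f xs * g xs)"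
proof -
  have "pr 2 (\<lambda>xs. natrec 0 (\<lambda>m v. v + arg 1 xs) (arg 0 xs))"
    by (rule pr_natrec) (rule pr_add pr_arg pr_const | simp add: arg_drop)+
  then have "pr 2 (\<lambda>ys. arg 0 ys * arg 1 ys)" by (rule pr_cong) (simp only: natrec_mult)
  then show "pr n f \<Longrightarrow> pr n g \<Longrightarrow> pr n (\<lambda>xs. f xs * g xs)" by (rule lift2)
qed

lemma pr_pow2: "pr n f \<Longrightarrow> pr n (\<lambda>xs. 2 ^ f xs)"
proof -
  have "pr 1 (\<lambda>xs. natrec 1 (\<lambda>m v. v + v) (arg 0 xs))"
    by (rule pr_natrec) (rule pr_add pr_arg pr_const | simp add: arg_drop)+
  then have "pr 1 (\<lambda>ys. 2 ^ arg 0 ys)" by (rule pr_cong) (simp only: natrec_pow)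
  then show "pr n f \<Longrightarrow> pr n (\<lambda>xs. 2 ^ f xs)" by (rule lift1)
qed

lemma pr_ifz: "pr n c \<Longrightarrow> pr n f \<Longrightarrow> pr n g \<Longrightarrow> pr n (\<lambda>xs. if c xs = 0 then f xs else g xs)"
proof -
  have "pr 3 (\<lambda>xs. natrec (arg 1 xs) (\<lambda>m v. arg 2 xs) (arg 0 xs))"
    by (rule pr_natrec) (rule pr_add pr_arg pr_const | simp add: arg_drop)+
  then have "pr 3 (\<lambda>ys. if arg 0 ys = 0 then arg 1 ys else arg 2 ys)" by (rule pr_cong) (simp only: natrec_ifz)
  then show "pr n c \<Longrightarrow> pr n f \<Longrightarrow> pr n g \<Longrightarrow> pr n (\<lambda>xs. if c xs = 0 then f xs else g xs)"
    by (rule lift3)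
qed

definition prp :: "nat \<Rightarrow> (nat list \<Rightarrow> bool) \<Rightarrow> bool" where
  "prp n P \<longleftrightarrow> pr n (\<lambda>xs. if P xs then 1 else 0)"

lemma pr_if: "prp n P \<Longrightarrow> pr n f \<Longrightarrow> pr n g \<Longrightarrow> pr n (\<lambda>xs. if P xs then f xs else g xs)"
  unfolding prp_def
  by (drule pr_ifz[where f=g and g=f]) (auto elim: pr_cong)

lemma prp_eq: "pr n f \<Longrightarrow> pr n g \<Longrightarrow> prp n (\<lambda>xs. f xs = g xs)"
  unfolding prp_def
  apply (rule pr_cong[where f="\<lambda>xs. if (f xs - g xs) + (g xs - f xs) = 0 then 1 else 0"])
   apply (intro pr_ifz pr_add pr_diff pr_const; assumption)
  by auto

lemma prp_le: "pr n f \<Longrightarrow> pr n g \<Longrightarrow> prp n (\<lambda>xs. f xs \<le> g xs)"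
  unfolding prp_def
  apply (rule pr_cong[where f="\<lambda>xs. if (f xs - g xs) = 0 then 1 else 0"])
   apply (intro pr_ifz pr_add pr_diff pr_const; assumption)
  by auto

lemma prp_less: "pr n f \<Longrightarrow> pr n g \<Longrightarrow> prp n (\<lambda>xs. f xs < g xs)"
  unfolding prp_def
  apply (rule pr_cong[where f="\<lambda>xs. if (Suc (f xs) - g xs) = 0 then 1 else 0"])
   apply (intro pr_ifz pr_Suc pr_diff pr_const; assumption)
  by auto

lemma prp_not: "prp n P \<Longrightarrow> prp n (\<lambda>xs. \<not> P xs)"
  unfolding prp_def
  apply (rule pr_cong[where f="\<lambda>xs. if (if P xs then 1 else (0::nat)) = 0 then 1 else 0"])
   apply (intro pr_ifz pr_const; assumption)
  by auto

lemma prp_conj: "prp n P \<Longrightarrow> prp n Q \<Longrightarrow> prp n (\<lambda>xs. P xs \<and> Q xs)"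
  unfolding prp_def
  apply (rule pr_cong[where f="\<lambda>xs. if (if P xs then 1 else (0::nat)) = 0 then 0 else (if Q xs then 1 else 0)"])
   apply (intro pr_ifz pr_const; assumption)
  by auto

lemma prp_disj: "prp n P \<Longrightarrow> prp n Q \<Longrightarrow> prp n (\<lambda>xs. P xs \<or> Q xs)"
  unfolding prp_def
  apply (rule pr_cong[where f="\<lambda>xs. if (if P xs then 1 else (0::nat)) = 0 then (if Q xs then 1 else 0) else 1"])
   apply (intro pr_ifz pr_const; assumption)
  by auto

lemma prp_imp: "prp n P \<Longrightarrow> prp n Q \<Longrightarrow> prp n (\<lambda>xs. P xs \<longrightarrow> Q xs)"
  unfolding prp_def
  apply (rule pr_cong[where f="\<lambda>xs. if (if P xs then 1 else (0::nat)) = 0 then 1 else (if Q xs then 1 else 0)"])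
   apply (intro pr_ifz pr_const; assumption)
  by auto

lemma pr_weak1:
  assumes "pr (Suc n) (\<lambda>ys. F (arg 0 ys) (tl ys))"
  shows "pr (Suc (Suc n)) (\<lambda>ys. F (arg 0 ys) (drop 2 ys))"
proof -
  let ?fs = "\<lambda>i ys. if i = 0 then arg 0 ys else arg (Suc i) ys"
  have "pr (Suc (Suc n)) (\<lambda>ys. (\<lambda>ys. F (arg 0 ys) (tl ys)) (map (\<lambda>i. ?fs i ys) [0..<Suc n]))"
  proof (rule pr_comp[OF assms], intro allI impI)
    fix i assume "i < Suc n" then show "pr (Suc (Suc n)) (?fs i)"
      by (cases "i = 0") (simp_all add: pr_arg)
  qed
  then show ?thesis
  proof (rule pr_cong)
    fix ys :: "nat list" assume l: "length ys = Suc (Suc n)"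
    have "map (\<lambda>i. ?fs i ys) [0..<Suc n] = arg 0 ys # drop 2 ys"
      using l by (auto simp: arg_def nth_Cons' simp del: upt_Suc intro!: nth_equalityI)
    then show "(\<lambda>ys. F (arg 0 ys) (tl ys)) (map (\<lambda>i. ?fs i ys) [0..<Suc n]) = F (arg 0 ys) (drop 2 ys)"
      by (simp add: arg_def)
  qed
qed

lemma natrec_sum: "natrec 0 (\<lambda>m v. v + F m) b = (\<Sum>i<b. F i)" by (induction b) auto

lemma pr_sum:
  assumes "pr (Suc n) (\<lambda>ys. F (arg 0 ys) (tl ys))" "pr n b"
  shows "pr n (\<lambda>xs. \<Sum>i<b xs. F i xs)"
proof -
  have "pr n (\<lambda>xs. natrec 0 (\<lambda>m v. v + F m xs) (b xs))"
    by (rule pr_natrec) (auto intro!: pr_add pr_arg pr_const pr_weak1 assms)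
  then show ?thesis by (rule pr_cong) (simp only: natrec_sum)
qed

lemma prp_ex:
  assumes "prp (Suc n) (\<lambda>ys. P (arg 0 ys) (tl ys))" "pr n b"
  shows "prp n (\<lambda>xs. \<exists>i<b xs. P i xs)"
proof -
  have "pr n (\<lambda>xs. if (\<Sum>i<b xs. if P i xs then 1 else (0::nat)) = 0 then 0 else 1)"
    using assms unfolding prp_def by (intro pr_ifz pr_sum pr_const) auto
  then show ?thesis unfolding prp_def by (rule pr_cong) auto
qed

lemma prp_all:
  assumes "prp (Suc n) (\<lambda>ys. P (arg 0 ys) (tl ys))" "pr n b"
  shows "prp n (\<lambda>xs. \<forall>i<b xs. P i xs)"
proof -
  have "prp n (\<lambda>xs. \<not> (\<exists>i<b xs. \<not> P i xs))"
    using assms by (intro prp_not prp_ex) auto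
  then show ?thesis unfolding prp_def by (rule pr_cong) auto
qed

lemma prp_True: "prp n (\<lambda>_. True)" unfolding prp_def by (simp add: pr_const)




lemmas prI = pr_const pr_arg pr_Suc pr_add pr_diff pr_mult pr_pow2 pr_ifz pr_if pr_sum
   prp_eq prp_le prp_less prp_not prp_conj prp_disj prp_imp prp_ex prp_all prp_True

lemma pr_triangle: "pr n f \<Longrightarrow> pr n (\<lambda>xs. triangle (f xs))"
proof -
  have "natrec 0 (\<lambda>j t. t + Suc j) b = triangle b" for b by (induction b) auto
  moreover have "pr 1 (\<lambda>xs. natrec 0 (\<lambda>j t. t + Suc j) (arg 0 xs))"
    by (rule pr_natrec) (rule prI | simp only: arg_drop | arith)+
  ultimately have "pr 1 (\<lambda>ys. triangle (arg 0 ys))" by (auto elim: pr_cong)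
  then show "pr n f \<Longrightarrow> pr n (\<lambda>xs. triangle (f xs))" by (rule lift1)
qed

lemma pr_penc: "pr n f \<Longrightarrow> pr n g \<Longrightarrow> pr n (\<lambda>xs. prod_encode (f xs, g xs))"
proof -
  have "pr 2 (\<lambda>ys. triangle (arg 0 ys + arg 1 ys) + arg 0 ys)"
    by (rule prI pr_triangle | arith)+
  then have "pr 2 (\<lambda>ys. prod_encode (arg 0 ys, arg 1 ys))" by (simp add: prod_encode_def)
  then show "pr n f \<Longrightarrow> pr n g \<Longrightarrow> pr n (\<lambda>xs. prod_encode (f xs, g xs))"
    using lift2[where h="\<lambda>a b. prod_encode (a, b)"] by blast
qed

definition tailc :: "nat \<Rightarrow> nat" where
  "tailc c = (\<Sum>v<c. if (\<exists>m<c. prod_encode (m, v) = c - 1) then v else 0)"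
definition headc :: "nat \<Rightarrow> nat" where
  "headc c = (\<Sum>m<c. if (\<exists>v<c. prod_encode (m, v) = c - 1) then m else 0)"

lemmas prI2 = prI pr_penc pr_triangle

lemma pr_tailc: "pr n f \<Longrightarrow> pr n (\<lambda>xs. tailc (f xs))"
proof -
  have "pr 1 (\<lambda>ys. tailc (arg 0 ys))" unfolding tailc_def
    by (rule prI2 | simp only: arg_tl | arith)+
  then show "pr n f \<Longrightarrow> pr n (\<lambda>xs. tailc (f xs))" by (rule lift1)
qed

lemma pr_headc: "pr n f \<Longrightarrow> pr n (\<lambda>xs. headc (f xs))"
proof -
  have "pr 1 (\<lambda>ys. headc (arg 0 ys))" unfolding headc_def
    by (rule prI2 | simp only: arg_tl | arith)+
  then show "pr n f \<Longrightarrow> pr n (\<lambda>xs. headc (f xs))" by (rule lift1)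
qed

lemma tailc_0[simp]: "tailc 0 = 0" by (simp add: tailc_def)

lemma tailc_code: "tailc (Suc (prod_encode (x, y))) = y"
proof -
  let ?c = "Suc (prod_encode (x, y))"
  have xy: "x < ?c" "y < ?c" using le_prod_encode_1[of x y] le_prod_encode_2[of y x] by auto
  have "(\<Sum>v<?c. if (\<exists>m<?c. prod_encode (m, v) = ?c - 1) then v else 0) = (\<Sum>v<?c. if v = y then v else 0)"
    using xy by (intro sum.cong) auto
  also have "\<dots> = y" using xy by (simp add: sum.delta)
  finally show ?thesis by (simp add: tailc_def)
qed

lemma headc_code: "headc (Suc (prod_encode (x, y))) = x"
proof -
  let ?c = "Suc (prod_encode (x, y))"
  have xy: "x < ?c" "y < ?c" using le_prod_encode_1[of x y] le_prod_encode_2[of y x] by auto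
  have "(\<Sum>m<?c. if (\<exists>v<?c. prod_encode (m, v) = ?c - 1) then m else 0) = (\<Sum>m<?c. if m = x then m else 0)"
    using xy by (intro sum.cong) auto
  also have "\<dots> = x" using xy by (simp add: sum.delta)
  finally show ?thesis by (simp add: headc_def)
qed

lemma tailc_list: "tailc (list_encode xs) = list_encode (tl xs)"
  by (cases xs) (auto simp: tailc_code)

definition nthc :: "nat \<Rightarrow> nat \<Rightarrow> nat" where
  "nthc i c = (if natrec c (\<lambda>m v. tailc v) i = 0 then 0 else Suc (headc (natrec c (\<lambda>m v. tailc v) i)))"

lemma pr_nthc: "pr n f \<Longrightarrow> pr n g \<Longrightarrow> pr n (\<lambda>xs. nthc (f xs) (g xs))"
proof -
  have N: "pr 2 (\<lambda>xs. natrec (arg 1 xs) (\<lambda>m v. tailc v) (arg 0 xs))"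
    by (rule pr_natrec) (rule prI pr_tailc | simp only: arg_drop | arith)+
  have "pr 2 (\<lambda>ys. nthc (arg 0 ys) (arg 1 ys))" unfolding nthc_def
    by (rule prI, rule N, rule pr_const, rule pr_Suc, rule pr_headc, rule N)
  then show "pr n f \<Longrightarrow> pr n g \<Longrightarrow> pr n (\<lambda>xs. nthc (f xs) (g xs))" by (rule lift2)
qed

lemma iter_list: "natrec (list_encode xs) (\<lambda>m v. tailc v) i = list_encode (drop i xs)"
  by (induction i) (auto simp: tailc_list drop_Suc tl_drop)

lemma nthc_list: "nthc i (list_encode xs) = (if i < length xs then Suc (xs ! i) else 0)"
proof (cases "i < length xs")
  case True
  then have "drop i xs = xs ! i # drop (Suc i) xs" by (simp add: Cons_nth_drop_Suc)
  then show ?thesis using True by (simp add: nthc_def iter_list headc_code)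
next
  case False
  then have "drop i xs = []" by simp
  then show ?thesis using False by (simp add: nthc_def iter_list)
qed

lemma nthc_prefix: "nthc i (prefix_code p k) = (if i < k then Suc (p i) else 0)"
  by (simp add: prefix_code_def nthc_list)




fun bw_decode :: "nat \<Rightarrow> bool list" where
  "bw_decode 0 = []"
| "bw_decode (Suc n) = odd n # bw_decode (n div 2)"

lemma bw_enc_dec[simp]: "bw_encode (bw_decode n) = n"
  by (induction n rule: bw_decode.induct) auto

lemma bw_dec_enc[simp]: "bw_decode (bw_encode w) = w"
  by (induction w) auto

lemma bw_enc_inj: "bw_encode u = bw_encode w \<longleftrightarrow> u = w"
  by (metis bw_dec_enc)

lemma enc_append: "bw_encode (u @ v) = bw_encode u + 2 ^ length u * bw_encode v"
  by (induction u) auto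

lemma enc_bounds: "2 ^ length w \<le> bw_encode w + 1 \<and> bw_encode w + 1 < 2 ^ (length w + 1)"
  by (induction w) auto

definition lenc :: "nat \<Rightarrow> nat" where
  "lenc c = (\<Sum>l<c. if 2 ^ (l + 1) \<le> c + 1 then 1 else 0)"

lemma sum_less_min: "(\<Sum>l<c. if l < L then 1 else 0::nat) = min c L"
  by (induction c) auto

lemma lenc_enc[simp]: "lenc (bw_encode w) = length w"
proof -
  let ?c = "bw_encode w" and ?L = "length w"
  have b: "2 ^ ?L \<le> ?c + 1" "?c + 1 < 2 ^ (?L + 1)" using enc_bounds[of w] by auto
  have "(2::nat) ^ (l + 1) \<le> ?c + 1 \<longleftrightarrow> l < ?L" for l
  proof
    assume h: "2 ^ (l + 1) \<le> ?c + 1"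
    show "l < ?L"
    proof (rule ccontr)
      assume "\<not> l < ?L"
      then have "(2::nat) ^ (?L + 1) \<le> 2 ^ (l + 1)" by (intro power_increasing) auto
      with h b show False by linarith
    qed
  next
    assume "l < ?L"
    then have "(2::nat) ^ (l + 1) \<le> 2 ^ ?L" by (intro power_increasing) auto
    with b show "2 ^ (l + 1) \<le> ?c + 1" by linarith
  qed
  then have "lenc ?c = (\<Sum>l<?c. if l < ?L then 1 else 0)" by (simp add: lenc_def)
  moreover have "?L \<le> ?c" using b less_exp[of ?L] by linarith
  ultimately show ?thesis by (simp add: sum_less_min)
qed

definition chc :: "nat \<Rightarrow> nat \<Rightarrow> nat" where
  "chc c b = c + 2 ^ (lenc c) * Suc b"

lemma chc_F: "chc (bw_encode w) 0 = bw_encode (w @ [False])"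
  by (simp add: chc_def enc_append)
lemma chc_T: "chc (bw_encode w) 1 = bw_encode (w @ [True])"
  by (simp add: chc_def enc_append)

definition isprefc :: "nat \<Rightarrow> nat \<Rightarrow> bool" where
  "isprefc u c = (\<exists>z<Suc c. c = u + 2 ^ (lenc u) * z)"

lemma isprefc_enc: "isprefc (bw_encode u) (bw_encode w) \<longleftrightarrow> (\<exists>v. w = u @ v)"
proof
  assume "isprefc (bw_encode u) (bw_encode w)"
  then obtain z where "bw_encode w = bw_encode u + 2 ^ length u * z" by (auto simp: isprefc_def)
  then have "bw_encode w = bw_encode (u @ bw_decode z)" by (simp add: enc_append)
  then show "\<exists>v. w = u @ v" by (auto simp: bw_enc_inj)
next
  assume "\<exists>v. w = u @ v"
  then obtain v where v: "w = u @ v" by blast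
  have le: "bw_encode v \<le> 2 ^ length u * bw_encode v" by simp
  show "isprefc (bw_encode u) (bw_encode w)" unfolding isprefc_def v enc_append lenc_enc
    apply (rule exI[of _ "bw_encode v"]) using le by linarith
qed

definition bitp :: "nat \<Rightarrow> nat \<Rightarrow> bool" where
  "bitp M c = (\<exists>q<Suc M. \<exists>r<2 ^ c. M = (2 * q + 1) * 2 ^ c + r)"

lemma bitp_iff: "bitp M c \<longleftrightarrow> c \<in> set_decode M"
proof
  assume "bitp M c"
  then obtain q r where "r < 2 ^ c" "M = (2 * q + 1) * 2 ^ c + r" by (auto simp: bitp_def)
  then have "M div 2 ^ c = 2 * q + 1" by (simp add: div_plus_div_distrib_dvd_left)
  then show "c \<in> set_decode M" by (simp add: set_decode_def)
next
  assume "c \<in> set_decode M"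
  then have o: "odd (M div 2 ^ c)" by (simp add: set_decode_def)
  define q where "q = M div 2 ^ c div 2"
  have "M div 2 ^ c = 2 * q + 1" using o unfolding q_def by (metis odd_two_times_div_two_succ)
  moreover have "M = (M div 2 ^ c) * 2 ^ c + M mod 2 ^ c" by (rule div_mult_mod_eq[symmetric])
  moreover have "q \<le> M" unfolding q_def by (meson div_le_dividend order_trans)
  ultimately show "bitp M c" unfolding bitp_def
    by (intro exI[of _ q] conjI exI[of _ "M mod 2 ^ c"]) auto
qed

lemma set_decode_less: "c \<in> set_decode M \<Longrightarrow> c < M"
proof -
  assume "c \<in> set_decode M"
  then have "odd (M div 2 ^ c)" by (simp add: set_decode_def)
  then have "M div 2 ^ c \<noteq> 0" by (metis even_zero)
  then have "2 ^ c \<le> M" by (simp add: div_eq_0_iff)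
  then show "c < M" using less_exp[of c] by linarith
qed

definition badc :: "(nat \<Rightarrow> nat) \<Rightarrow> nat \<Rightarrow> nat \<Rightarrow> bool" where
  "badc rd m c = (\<exists>j<m. rd (2 * j + 1) \<noteq> 0 \<and> isprefc (rd (2 * j + 1) - 1) c)"

definition ccert :: "(nat \<Rightarrow> nat) \<Rightarrow> nat \<Rightarrow> nat \<Rightarrow> bool" where
  "ccert rd M m = (bitp M 0 \<and> (\<forall>c<M. bitp M c \<longrightarrow> badc rd m c \<or>
      (rd (2 * c) = 1 \<and> bitp M (chc c 0) \<and> bitp M (chc c 1)) \<or>
      (rd (2 * c) \<noteq> 1 \<and> (bitp M (chc c 0) \<or> bitp M (chc c 1)))))"

lemma ccert_cong:
  assumes "\<forall>i<2 * m. rd i = rd' i" "M \<le> m"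
  shows "ccert rd M m = ccert rd' M m"
proof -
  have j: "j < m \<Longrightarrow> rd (2 * j + 1) = rd' (2 * j + 1)" for j using assms(1) by auto
  have b: "badc rd m c = badc rd' m c" for c
    unfolding badc_def using j by (intro ex_cong1) (metis (no_types, lifting))
  have "c < M \<Longrightarrow> rd (2 * c) = rd' (2 * c)" for c using assms by auto
  then show ?thesis unfolding ccert_def using b by auto
qed




lemma pr_lenc: "pr n f \<Longrightarrow> pr n (\<lambda>xs. lenc (f xs))"
proof -
  have "pr 1 (\<lambda>ys. lenc (arg 0 ys))" unfolding lenc_def
    by (rule prI2 | simp only: arg_tl | arith)+
  then show "pr n f \<Longrightarrow> pr n (\<lambda>xs. lenc (f xs))" by (rule lift1)
qed

lemma pr_chc: "pr n f \<Longrightarrow> pr n g \<Longrightarrow> pr n (\<lambda>xs. chc (f xs) (g xs))"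
proof -
  have "pr 2 (\<lambda>ys. chc (arg 0 ys) (arg 1 ys))" unfolding chc_def
    by (rule prI2 pr_lenc | simp only: arg_tl | arith)+
  then show "pr n f \<Longrightarrow> pr n g \<Longrightarrow> pr n (\<lambda>xs. chc (f xs) (g xs))" by (rule lift2)
qed

lemma prp_isprefc: "pr n f \<Longrightarrow> pr n g \<Longrightarrow> prp n (\<lambda>xs. isprefc (f xs) (g xs))"
proof -
  have "prp 2 (\<lambda>ys. isprefc (arg 0 ys) (arg 1 ys))" unfolding isprefc_def
    by (rule prI2 pr_lenc | simp only: arg_tl | arith)+
  then show "pr n f \<Longrightarrow> pr n g \<Longrightarrow> prp n (\<lambda>xs. isprefc (f xs) (g xs))"
    unfolding prp_def by (rule lift2[where h="\<lambda>a b. if isprefc a b then 1 else 0"])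
qed

lemma prp_bitp: "pr n f \<Longrightarrow> pr n g \<Longrightarrow> prp n (\<lambda>xs. bitp (f xs) (g xs))"
proof -
  have "prp 2 (\<lambda>ys. bitp (arg 0 ys) (arg 1 ys))" unfolding bitp_def
    by (rule prI2 | simp only: arg_tl | arith)+
  then show "pr n f \<Longrightarrow> pr n g \<Longrightarrow> prp n (\<lambda>xs. bitp (f xs) (g xs))"
    unfolding prp_def by (rule lift2[where h="\<lambda>a b. if bitp a b then 1 else 0"])
qed

lemma prp_badc: "pr n f \<Longrightarrow> pr n g \<Longrightarrow> pr n h \<Longrightarrow> prp n (\<lambda>xs. badc (\<lambda>i. nthc i (f xs) - 1) (g xs) (h xs))"
proof -
  have "prp 3 (\<lambda>ys. badc (\<lambda>i. nthc i (arg 0 ys) - 1) (arg 1 ys) (arg 2 ys))" unfolding badc_def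
    by (rule prI2 pr_nthc prp_isprefc | simp only: arg_tl | arith)+
  then show "pr n f \<Longrightarrow> pr n g \<Longrightarrow> pr n h \<Longrightarrow> prp n (\<lambda>xs. badc (\<lambda>i. nthc i (f xs) - 1) (g xs) (h xs))"
    unfolding prp_def by (rule lift3[where h="\<lambda>a b c. if badc (\<lambda>i. nthc i a - 1) b c then 1 else 0"])
qed

lemma prp_ccert: "pr n f \<Longrightarrow> pr n g \<Longrightarrow> pr n h \<Longrightarrow> prp n (\<lambda>xs. ccert (\<lambda>i. nthc i (f xs) - 1) (g xs) (h xs))"
proof -
  have "prp 3 (\<lambda>ys. ccert (\<lambda>i. nthc i (arg 0 ys) - 1) (arg 1 ys) (arg 2 ys))" unfolding ccert_def
    by (rule prI2 pr_nthc prp_bitp prp_badc pr_chc | simp only: arg_tl | arith)+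
  then show "pr n f \<Longrightarrow> pr n g \<Longrightarrow> pr n h \<Longrightarrow> prp n (\<lambda>xs. ccert (\<lambda>i. nthc i (f xs) - 1) (g xs) (h xs))"
    unfolding prp_def by (rule lift3[where h="\<lambda>a b c. if ccert (\<lambda>i. nthc i a - 1) b c then 1 else 0"])
qed



definition badw :: "baire \<Rightarrow> bool list \<Rightarrow> bool" where
  "badw a w = (\<exists>u v. w = u @ v \<and> (\<exists>n. a n = Suc (bw_encode u)))"

definition cond :: "(bool list \<Rightarrow> nat) \<Rightarrow> baire \<Rightarrow> bool list set \<Rightarrow> bool list \<Rightarrow> bool" where
  "cond d a S w = (badw a w \<or> (d w = 1 \<and> w @ [False] \<in> S \<and> w @ [True] \<in> S) \<or>
       (d w \<noteq> 1 \<and> (w @ [False] \<in> S \<or> w @ [True] \<in> S)))"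

definition certw :: "(bool list \<Rightarrow> nat) \<Rightarrow> baire \<Rightarrow> bool list set \<Rightarrow> bool" where
  "certw d a S = (finite S \<and> (\<forall>w\<in>S. cond d a S w))"

lemma cond_mono: "S \<subseteq> S' \<Longrightarrow> cond d a S w \<Longrightarrow> cond d a S' w"
  unfolding cond_def by blast

lemma prefix_Suc: "prefix x (Suc n) = prefix x n @ [x n]" by (simp add: prefix_def)
lemma prefix_0[simp]: "prefix x 0 = []" by (simp add: prefix_def)
lemma length_prefix[simp]: "length (prefix x n) = n" by (simp add: prefix_def)

lemma in_cyl: "x \<in> cyl w \<longleftrightarrow> prefix x (length w) = w"
  unfolding cyl_def prefix_def list_eq_iff_nth_eq by auto

lemma take_prefix: "k \<le> n \<Longrightarrow> take k (prefix x n) = prefix x k"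
  by (simp add: prefix_def take_map)

lemma closed_named_iff: "x \<in> closed_named a \<longleftrightarrow> (\<forall>n. \<not> badw a (prefix x n))"
proof
  assume x: "x \<in> closed_named a"
  show "\<forall>n. \<not> badw a (prefix x n)"
  proof (intro allI notI)
    fix n assume "badw a (prefix x n)"
    then obtain u v k where uv: "prefix x n = u @ v" "a k = Suc (bw_encode u)" by (auto simp: badw_def)
    have "length u \<le> n" using arg_cong[OF uv(1), of length] by simp
    then have "prefix x (length u) = u" using take_prefix[of "length u" n x] uv(1) by simp
    then have "x \<in> cyl u" by (simp add: in_cyl)
    then show False using x uv(2) by (auto simp: closed_named_def)
  qed
next
  assume nb: "\<forall>n. \<not> badw a (prefix x n)"
  show "x \<in> closed_named a"
  proof (rule ccontr)
    assume "x \<notin> closed_named a"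
    then obtain w k where "x \<in> cyl w" "a k = Suc (bw_encode w)" by (auto simp: closed_named_def)
    then have "badw a (prefix x (length w))" by (auto simp: in_cyl badw_def)
    then show False using nb by blast
  qed
qed

lemma win2:
  assumes d: "\<forall>w. d w \<in> {1, 2}" and c: "certw d a S" and r: "[] \<in> S"
  shows "winning_strategy (d, closed_named a) 2 (\<lambda>w. w @ [False] \<notin> S)"
  unfolding winning_strategy_def
proof (intro allI impI)
  fix x assume cons: "consistent (fst (d, closed_named a)) 2 (\<lambda>w. w @ [False] \<notin> S) x"
  have "x \<notin> closed_named a"
  proof
    assume "x \<in> closed_named a"
    then have nb: "\<And>n. \<not> badw a (prefix x n)" by (simp add: closed_named_iff)
    have inS: "prefix x n \<in> S" for n
    proof (induction n)
      case 0 then show ?case using r by simp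
    next
      case (Suc n)
      let ?w = "prefix x n"
      have cw: "cond d a S ?w" using c Suc unfolding certw_def by blast
      show ?case
      proof (cases "d ?w = 1")
        case True
        then have "?w @ [False] \<in> S" "?w @ [True] \<in> S" using cw nb[of n] unfolding cond_def by auto
        then show ?thesis by (cases "x n") (auto simp: prefix_Suc)
      next
        case False
        then have "d ?w = 2" using d by auto
        then have xn: "x n = (?w @ [False] \<notin> S)" using cons unfolding consistent_def by auto
        have "?w @ [False] \<in> S \<or> ?w @ [True] \<in> S" using cw nb[of n] False unfolding cond_def by auto
        then show ?thesis using xn by (auto simp: prefix_Suc)
      qed
    qed
    have "inj (prefix x)" by (rule injI) (metis length_prefix)
    moreover have "finite (range (prefix x))" using inS c unfolding certw_def
      by (meson finite_subset image_subsetI)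
    ultimately have "finite (UNIV :: nat set)" using finite_imageD by blast
    then show False by simp
  qed
  then show "if (2::nat) = 1 then x \<in> snd (d, closed_named a) else x \<notin> snd (d, closed_named a)" by simp
qed

lemma win1:
  assumes nc: "\<not> (\<exists>S. certw d a S \<and> [] \<in> S)"
  shows "winning_strategy (d, closed_named a) 1 (\<lambda>w. \<exists>S. certw d a S \<and> w @ [False] \<in> S)"
  unfolding winning_strategy_def
proof (intro allI impI)
  let ?NC = "\<lambda>w. \<not> (\<exists>S. certw d a S \<and> w \<in> S)"
  have nb: "\<not> badw a w" if "?NC w" for w
  proof
    assume "badw a w"
    then have "certw d a {w}" by (simp add: certw_def cond_def)
    then show False using that by blast
  qed
  have c1: "?NC (w @ [False]) \<or> ?NC (w @ [True])" if "?NC w" "d w = 1" for w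
  proof (rule ccontr)
    assume "\<not> ?thesis"
    then obtain S1 S2 where s: "certw d a S1" "w @ [False] \<in> S1" "certw d a S2" "w @ [True] \<in> S2" by blast
    let ?S = "insert w (S1 \<union> S2)"
    have "certw d a ?S" unfolding certw_def
    proof (intro conjI ballI)
      show "finite ?S" using s unfolding certw_def by auto
    next
      fix w' assume "w' \<in> ?S"
      then show "cond d a ?S w'"
      proof (elim insertE UnE)
        assume "w' = w" then show ?thesis unfolding cond_def using s(2,4) that(2) by blast
      next
        assume "w' \<in> S1"
        then have "cond d a S1 w'" using s(1) unfolding certw_def by blast
        then show ?thesis by (rule cond_mono[rotated]) blast
      next
        assume "w' \<in> S2"
        then have "cond d a S2 w'" using s(3) unfolding certw_def by blast
        then show ?thesis by (rule cond_mono[rotated]) blast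
      qed
    qed
    then show False using that(1) by blast
  qed
  have c2: "?NC (w @ [b])" if "?NC w" "d w \<noteq> 1" for w b
  proof
    assume "\<exists>S. certw d a S \<and> w @ [b] \<in> S"
    then obtain S where s: "certw d a S" "w @ [b] \<in> S" by blast
    let ?S = "insert w S"
    have "certw d a ?S" unfolding certw_def
    proof (intro conjI ballI)
      show "finite ?S" using s unfolding certw_def by auto
    next
      fix w' assume "w' \<in> ?S"
      then show "cond d a ?S w'"
      proof (elim insertE)
        assume "w' = w" then show ?thesis unfolding cond_def using s(2) that(2) by (cases b) simp_all
      next
        assume "w' \<in> S"
        then have "cond d a S w'" using s(1) unfolding certw_def by blast
        then show ?thesis by (rule cond_mono[rotated]) blast
      qed
    qed
    then show False using that(1) by blast
  qed
  fix x assume cons: "consistent (fst (d, closed_named a)) 1 (\<lambda>w. \<exists>S. certw d a S \<and> w @ [False] \<in> S) x"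
  have NC: "?NC (prefix x n)" for n
  proof (induction n)
    case 0 then show ?case using nc by simp
  next
    case (Suc n)
    let ?w = "prefix x n"
    show ?case
    proof (cases "d ?w = 1")
      case True
      then have xn: "x n = (\<exists>S. certw d a S \<and> ?w @ [False] \<in> S)" using cons unfolding consistent_def by auto
      show ?thesis
      proof (cases "?NC (?w @ [False])")
        case True
        then have "x n = False" using xn by blast
        then show ?thesis using True by (simp add: prefix_Suc)
      next
        case False
        then have "x n = True" using xn by blast
        then show ?thesis using False c1[OF Suc \<open>d ?w = 1\<close>] by (simp add: prefix_Suc)
      qed
    next
      case False then show ?thesis using c2[OF Suc False] by (simp add: prefix_Suc)
    qed
  qed
  then have "x \<in> closed_named a" using nb by (simp add: closed_named_iff)
  then show "if 1 = 1 then x \<in> snd (d, closed_named a) else x \<notin> snd (d, closed_named a)" by simp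
qed




lemma fst_b_code: "fst_b r c = r (2 * c)" by (simp add: fst_b_def)
lemma snd_b_code: "snd_b r j = r (2 * j + 1)" by (simp add: snd_b_def)

lemma certC:
  assumes cc: "ccert r M m"
  shows "certw (\<lambda>w. fst_b r (bw_encode w)) (snd_b r) (bw_decode ` set_decode M) \<and> [] \<in> bw_decode ` set_decode M"
proof -
  let ?S = "bw_decode ` set_decode M"
  have "0 \<in> set_decode M" using cc by (simp add: ccert_def bitp_iff)
  then have r0: "[] \<in> ?S" by (metis bw_decode.simps(1) image_eqI)
  have "cond (\<lambda>w. fst_b r (bw_encode w)) (snd_b r) ?S w" if "w \<in> ?S" for w
  proof -
    obtain c where c: "c \<in> set_decode M" "w = bw_decode c" using \<open>w \<in> ?S\<close> by blast
    have cM: "c < M" using c(1) by (rule set_decode_less)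
    have ew: "bw_encode w = c" using c by simp
    have ch0: "bw_decode (chc c 0) = w @ [False]" using chc_F[of w] ew by simp
    have ch1: "bw_decode (chc c 1) = w @ [True]" using chc_T[of w] ew by simp
    have dis: "badc r m c \<or> (r (2 * c) = 1 \<and> bitp M (chc c 0) \<and> bitp M (chc c 1)) \<or>
      (r (2 * c) \<noteq> 1 \<and> (bitp M (chc c 0) \<or> bitp M (chc c 1)))"
      using cc cM c(1) by (simp add: ccert_def bitp_iff)
    show ?thesis
    proof (cases "badc r m c")
      case True
      then obtain j where j: "r (2 * j + 1) \<noteq> 0" "isprefc (r (2 * j + 1) - 1) c"
        by (auto simp: badc_def)
      let ?u = "bw_decode (r (2 * j + 1) - 1)"
      have "isprefc (bw_encode ?u) (bw_encode w)" using j(2) ew by (metis bw_enc_dec)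
      then have "\<exists>v. w = ?u @ v" by (simp only: isprefc_enc)
      then obtain v where "w = ?u @ v" by blast
      moreover have "snd_b r j = Suc (bw_encode ?u)" using j(1) by (simp add: snd_b_code)
      ultimately have "badw (snd_b r) w" unfolding badw_def by blast
      then show ?thesis by (simp add: cond_def)
    next
      case False
      then have "(r (2 * c) = 1 \<and> bitp M (chc c 0) \<and> bitp M (chc c 1)) \<or>
        (r (2 * c) \<noteq> 1 \<and> (bitp M (chc c 0) \<or> bitp M (chc c 1)))" using dis by blast
      then show ?thesis unfolding cond_def fst_b_code ew bitp_iff
        using ch0 ch1 by (metis image_eqI)
    qed
  qed
  then show ?thesis using r0 by (simp add: certw_def)
qed

lemma certD:
  assumes c: "certw (\<lambda>w. fst_b r (bw_encode w)) (snd_b r) S" and r0: "[] \<in> S"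
  shows "\<exists>m. \<exists>M<Suc m. ccert r M m"
proof -
  let ?d = "\<lambda>w. fst_b r (bw_encode w)" and ?a = "snd_b r"
  have fin: "finite S" using c by (simp add: certw_def)
  have "\<forall>w\<in>S. \<exists>j. badw ?a w \<longrightarrow> (\<exists>u v. w = u @ v \<and> ?a j = Suc (bw_encode u))"
    unfolding badw_def by blast
  then obtain J where J: "\<And>w. w \<in> S \<Longrightarrow> badw ?a w \<Longrightarrow> \<exists>u v. w = u @ v \<and> ?a (J w) = Suc (bw_encode u)"
    by metis
  define B where "B = Suc (Max (J ` S))"
  have JB: "w \<in> S \<Longrightarrow> J w < B" for w using fin by (simp add: B_def le_imp_less_Suc)
  define M where "M = set_encode (bw_encode ` S)"
  have dM: "set_decode M = bw_encode ` S" using fin by (simp add: M_def)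
  define m where "m = M + B"
  have "ccert r M m" unfolding ccert_def
  proof (intro conjI allI impI)
    have "bw_encode [] \<in> bw_encode ` S" using r0 by blast
    then show "bitp M 0" by (simp add: bitp_iff dM)
  next
    fix c assume "c < M" "bitp M c"
    then obtain w where w: "w \<in> S" "c = bw_encode w" by (auto simp: bitp_iff dM)
    have cw: "cond ?d ?a S w" using c w(1) by (simp add: certw_def)
    have c0: "chc c 0 = bw_encode (w @ [False])" unfolding w(2) by (rule chc_F)
    have c1: "chc c 1 = bw_encode (w @ [True])" unfolding w(2) by (rule chc_T)
    have ch: "bitp M (chc c 0) \<longleftrightarrow> w @ [False] \<in> S" "bitp M (chc c 1) \<longleftrightarrow> w @ [True] \<in> S"
      unfolding c0 c1 bitp_iff dM by (simp_all add: bw_enc_inj inj_image_mem_iff inj_def)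
    show "badc r m c \<or> (r (2 * c) = 1 \<and> bitp M (chc c 0) \<and> bitp M (chc c 1)) \<or>
      (r (2 * c) \<noteq> 1 \<and> (bitp M (chc c 0) \<or> bitp M (chc c 1)))"
    proof (cases "badw ?a w")
      case True
      then obtain u v where uv: "w = u @ v" "?a (J w) = Suc (bw_encode u)" using J w(1) by blast
      have "J w < m" using JB[OF w(1)] by (simp add: m_def)
      moreover have "r (2 * J w + 1) = Suc (bw_encode u)" using uv(2) by (simp add: snd_b_code)
      moreover have "isprefc (bw_encode u) c" using uv(1) w(2) by (auto simp: isprefc_enc)
      ultimately have "badc r m c" unfolding badc_def by (intro exI[of _ "J w"]) auto
      then show ?thesis by blast
    next
      case False
      then show ?thesis using cw ch unfolding cond_def fst_b_code w(2) by auto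
    qed
  qed
  moreover have "M < Suc m" by (simp add: m_def)
  ultimately show ?thesis by blast
qed




lemma computableI:
  assumes "pr 2 F"
    and "\<And>p q n. K p = Some q \<Longrightarrow> (\<exists>k. F [n, prefix_code p k] \<noteq> 0) \<and>
            (\<forall>k. F [n, prefix_code p k] \<noteq> 0 \<longrightarrow> F [n, prefix_code p k] = Suc (q n))"
  shows "computable K"
proof -
  obtain c where c: "\<And>xs. eval c xs = F (env 2 xs)" using assms(1) unfolding pr_def by blast
  have e: "env 2 [a, b] = [a, b]" for a b by (simp add: env_id)
  show ?thesis unfolding computable_def
    apply (rule exI[of _ c])
    apply (intro allI impI)
    apply (simp only: c e)
    using assms(2) by blast
qed

definition Kc :: "baire \<Rightarrow> baire option" where "Kc x = Some (\<lambda>_. 2 - x 1)"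
definition H1 :: "baire \<Rightarrow> baire option" where "H1 p = Some (pair (\<lambda>_. 1) p)"
definition H2 :: "baire \<Rightarrow> baire option" where
  "H2 r = Some (\<lambda>m. if \<exists>M<Suc m. ccert r M m then 1 else 0)"

lemma comp_Kc: "computable Kc"
proof (rule computableI[where F="\<lambda>ys. if nthc 1 (arg 1 ys) = 0 then 0 else Suc (2 - (nthc 1 (arg 1 ys) - 1))"])
  show "pr 2 (\<lambda>ys. if nthc 1 (arg 1 ys) = 0 then 0 else Suc (2 - (nthc 1 (arg 1 ys) - 1)))"
    by (rule prI2 pr_nthc | arith)+
next
  fix p q n assume "Kc p = Some q"
  then have q: "q = (\<lambda>_. 2 - p 1)" by (simp add: Kc_def)
  show "(\<exists>k. (if nthc 1 (arg 1 [n, prefix_code p k]) = 0 then 0 else Suc (2 - (nthc 1 (arg 1 [n, prefix_code p k]) - 1))) \<noteq> 0) \<and>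
    (\<forall>k. (if nthc 1 (arg 1 [n, prefix_code p k]) = 0 then 0 else Suc (2 - (nthc 1 (arg 1 [n, prefix_code p k]) - 1))) \<noteq> 0 \<longrightarrow>
     (if nthc 1 (arg 1 [n, prefix_code p k]) = 0 then 0 else Suc (2 - (nthc 1 (arg 1 [n, prefix_code p k]) - 1))) = Suc (q n))"
    by (auto simp: arg_def nthc_prefix q intro!: exI[of _ 2])
qed

lemma half_sum: "(\<Sum>h<Suc n. if n = h + h \<or> n = Suc (h + h) then h else 0) = n div 2"
proof -
  have "(\<Sum>h<Suc n. if n = h + h \<or> n = Suc (h + h) then h else 0) = (\<Sum>h<Suc n. if h = n div 2 then h else 0)"
    by (intro sum.cong) auto
  also have "\<dots> = n div 2" by (simp add: sum.delta)
  finally show ?thesis .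
qed

lemma comp_H1: "computable H1"
proof (rule computableI[where F="\<lambda>ys. if (\<exists>h<Suc (arg 0 ys). arg 0 ys = h + h) then 2 else
      nthc (\<Sum>h<Suc (arg 0 ys). if arg 0 ys = h + h \<or> arg 0 ys = Suc (h + h) then h else 0) (arg 1 ys)"])
  show "pr 2 (\<lambda>ys. if (\<exists>h<Suc (arg 0 ys). arg 0 ys = h + h) then 2 else
      nthc (\<Sum>h<Suc (arg 0 ys). if arg 0 ys = h + h \<or> arg 0 ys = Suc (h + h) then h else 0) (arg 1 ys))"
    by (rule prI2 pr_nthc | simp only: arg_tl | arith)+
next
  fix p q n assume "H1 p = Some q"
  then have q: "q = pair (\<lambda>_. 1) p" by (simp add: H1_def)
  have ev: "(\<exists>h<Suc n. n = h + h) \<longleftrightarrow> even n" by presburger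
  show "(\<exists>k. (\<lambda>ys. if (\<exists>h<Suc (arg 0 ys). arg 0 ys = h + h) then 2 else
      nthc (\<Sum>h<Suc (arg 0 ys). if arg 0 ys = h + h \<or> arg 0 ys = Suc (h + h) then h else 0) (arg 1 ys)) [n, prefix_code p k] \<noteq> 0) \<and>
    (\<forall>k. (\<lambda>ys. if (\<exists>h<Suc (arg 0 ys). arg 0 ys = h + h) then 2 else
      nthc (\<Sum>h<Suc (arg 0 ys). if arg 0 ys = h + h \<or> arg 0 ys = Suc (h + h) then h else 0) (arg 1 ys)) [n, prefix_code p k] \<noteq> 0 \<longrightarrow>
     (\<lambda>ys. if (\<exists>h<Suc (arg 0 ys). arg 0 ys = h + h) then 2 else
      nthc (\<Sum>h<Suc (arg 0 ys). if arg 0 ys = h + h \<or> arg 0 ys = Suc (h + h) then h else 0) (arg 1 ys)) [n, prefix_code p k] = Suc (q n))"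
    unfolding q by (auto simp: arg_def ev half_sum nthc_prefix pair_def simp del: sum.lessThan_Suc intro!: exI[of _ "Suc (n div 2)"])
qed

lemma comp_H2: "computable H2"
proof (rule computableI[where F="\<lambda>ys. if nthc (2 * arg 0 ys) (arg 1 ys) = 0 then 0 else
     Suc (if \<exists>M<Suc (arg 0 ys). ccert (\<lambda>i. nthc i (arg 1 ys) - 1) M (arg 0 ys) then 1 else 0)"])
  show "pr 2 (\<lambda>ys. if nthc (2 * arg 0 ys) (arg 1 ys) = 0 then 0 else
     Suc (if \<exists>M<Suc (arg 0 ys). ccert (\<lambda>i. nthc i (arg 1 ys) - 1) M (arg 0 ys) then 1 else 0))"
    by (rule prI2 pr_nthc prp_ccert | simp only: arg_tl | arith)+
next
  fix p q m assume "H2 p = Some q"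
  then have q: "q = (\<lambda>m. if \<exists>M<Suc m. ccert p M m then 1 else 0)" by (simp add: H2_def)
  have cong: "ccert (\<lambda>i. nthc i (prefix_code p k) - 1) M m = ccert p M m" if "2 * m < k" "M < Suc m" for k M
    by (rule ccert_cong) (use that in \<open>auto simp: nthc_prefix\<close>)
  show "(\<exists>k. (\<lambda>ys. if nthc (2 * arg 0 ys) (arg 1 ys) = 0 then 0 else
     Suc (if \<exists>M<Suc (arg 0 ys). ccert (\<lambda>i. nthc i (arg 1 ys) - 1) M (arg 0 ys) then 1 else 0)) [m, prefix_code p k] \<noteq> 0) \<and>
    (\<forall>k. (\<lambda>ys. if nthc (2 * arg 0 ys) (arg 1 ys) = 0 then 0 else
     Suc (if \<exists>M<Suc (arg 0 ys). ccert (\<lambda>i. nthc i (arg 1 ys) - 1) M (arg 0 ys) then 1 else 0)) [m, prefix_code p k] \<noteq> 0 \<longrightarrow>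
    (\<lambda>ys. if nthc (2 * arg 0 ys) (arg 1 ys) = 0 then 0 else
     Suc (if \<exists>M<Suc (arg 0 ys). ccert (\<lambda>i. nthc i (arg 1 ys) - 1) M (arg 0 ys) then 1 else 0)) [m, prefix_code p k] = Suc (q m))"
  proof (intro conjI allI impI)
    show "\<exists>k. (\<lambda>ys. if nthc (2 * arg 0 ys) (arg 1 ys) = 0 then 0 else
     Suc (if \<exists>M<Suc (arg 0 ys). ccert (\<lambda>i. nthc i (arg 1 ys) - 1) M (arg 0 ys) then 1 else 0)) [m, prefix_code p k] \<noteq> 0"
      by (rule exI[of _ "Suc (2 * m)"]) (simp add: arg_def nthc_prefix)
  next
    fix k assume h: "(\<lambda>ys. if nthc (2 * arg 0 ys) (arg 1 ys) = 0 then 0 else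
     Suc (if \<exists>M<Suc (arg 0 ys). ccert (\<lambda>i. nthc i (arg 1 ys) - 1) M (arg 0 ys) then 1 else 0)) [m, prefix_code p k] \<noteq> 0"
    then have k: "2 * m < k" by (simp add: arg_def nthc_prefix split: if_splits)
    have "(\<exists>M<Suc m. ccert (\<lambda>i. nthc i (prefix_code p k) - 1) M m) = (\<exists>M<Suc m. ccert p M m)"
      using cong[OF k] by blast
    then show "(\<lambda>ys. if nthc (2 * arg 0 ys) (arg 1 ys) = 0 then 0 else
     Suc (if \<exists>M<Suc (arg 0 ys). ccert (\<lambda>i. nthc i (arg 1 ys) - 1) M (arg 0 ys) then 1 else 0)) [m, prefix_code p k] = Suc (q m)"
      using k by (simp add: arg_def nthc_prefix q)
  qed
qed




lemma pair_1: "pair p s (Suc 0) = s 0" by (simp add: pair_def)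
lemma fst_b_pair[simp]: "fst_b (pair a b) = a" by (simp add: fst_b_def pair_def)
lemma snd_b_pair[simp]: "snd_b (pair a b) = b" by (simp add: snd_b_def pair_def)

primrec playW :: "(bool list \<Rightarrow> bool) \<Rightarrow> nat \<Rightarrow> bool list" where
  "playW \<sigma> 0 = []"
| "playW \<sigma> (Suc n) = playW \<sigma> n @ [\<sigma> (playW \<sigma> n)]"

lemma playW_prefix: "prefix (\<lambda>n. \<sigma> (playW \<sigma> n)) n = playW \<sigma> n"
  by (induction n) (simp_all add: prefix_Suc)

lemma Win_le_LPO: "weihrauch_le closed_game_rep player_rep Win cantor_rep bit_rep LPO"
  unfolding weihrauch_le_def
proof (rule exI[of _ Kc], rule exI[of _ H2], intro conjI allI impI)
  show "computable Kc" by (rule comp_Kc)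
  show "computable H2" by (rule comp_H2)
  fix G assume G: "realizes cantor_rep bit_rep LPO G"
  show "realizes closed_game_rep player_rep Win (\<lambda>p. Option.bind (H2 p) (\<lambda>h. Option.bind (G h) (\<lambda>r. Kc (pair p r))))"
    unfolding realizes_def
  proof (intro allI impI, elim conjE)
    fix p x assume px: "closed_game_rep p = Some x"
    let ?d = "\<lambda>w. fst_b p (bw_encode w)"
    have dv: "\<forall>w. ?d w \<in> {1, 2}" and x: "x = (?d, closed_named (snd_b p))"
      using px by (auto simp: closed_game_rep_def split: if_splits)
    define h where "h = (\<lambda>m. if \<exists>M<Suc m. ccert p M m then 1 else 0::nat)"
    have H: "H2 p = Some h" by (simp add: H2_def h_def)
    have "cantor_rep h = Some h" by (simp add: cantor_rep_def h_def)
    moreover have "LPO h \<noteq> {}" by (simp add: LPO_def)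
    ultimately obtain s y where s: "G h = Some s" "bit_rep s = Some y" "y \<in> LPO h"
      using G unfolding realizes_def by blast
    have s0: "s 0 = (if h = (\<lambda>_. 0) then 1 else 0)" using s(2,3)
      by (auto simp: bit_rep_def LPO_def split: if_splits)
    have res: "Option.bind (H2 p) (\<lambda>h. Option.bind (G h) (\<lambda>r. Kc (pair p r))) = Some (\<lambda>_. 2 - s 0)"
      by (simp add: H s(1) Kc_def pair_1)
    have "2 - s 0 \<in> Win x"
    proof (cases "h = (\<lambda>_. 0)")
      case True
      have "\<not> (\<exists>S. certw ?d (snd_b p) S \<and> [] \<in> S)"
      proof
        assume "\<exists>S. certw ?d (snd_b p) S \<and> [] \<in> S"
        then obtain m M where "M < Suc m" "ccert p M m" using certD by blast
        then have "h m = 1" by (auto simp: h_def)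
        then show False using True by (metis zero_neq_one)
      qed
      from win1[OF this] have "1 \<in> Win x" unfolding x Win_def by blast
      then show ?thesis using True s0 by simp
    next
      case False
      then obtain m where "h m \<noteq> 0" by auto
      then obtain M where "ccert p M m" by (auto simp: h_def split: if_splits)
      from certC[OF this] have "certw ?d (snd_b p) (bw_decode ` set_decode M)" "[] \<in> bw_decode ` set_decode M"
        by blast+
      from win2[OF dv this] have "2 \<in> Win x" unfolding x Win_def by blast
      then show ?thesis using False s0 by simp
    qed
    moreover have "player_rep (\<lambda>_. 2 - s 0) = Some (2 - s 0)" using s0 by (simp add: player_rep_def)
    ultimately show "\<exists>q y. Option.bind (H2 p) (\<lambda>h. Option.bind (G h) (\<lambda>r. Kc (pair p r))) = Some q \<and>
      player_rep q = Some y \<and> y \<in> Win x" using res by blast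
  qed
qed

lemma LPO_le_Win: "weihrauch_le cantor_rep bit_rep LPO closed_game_rep player_rep Win"
  unfolding weihrauch_le_def
proof (rule exI[of _ Kc], rule exI[of _ H1], intro conjI allI impI)
  show "computable Kc" by (rule comp_Kc)
  show "computable H1" by (rule comp_H1)
  fix G assume G: "realizes closed_game_rep player_rep Win G"
  show "realizes cantor_rep bit_rep LPO (\<lambda>p. Option.bind (H1 p) (\<lambda>h. Option.bind (G h) (\<lambda>r. Kc (pair p r))))"
    unfolding realizes_def
  proof (intro allI impI, elim conjE)
    fix p x assume px: "cantor_rep p = Some x"
    then have x: "x = p" and p01: "\<forall>n. p n \<le> 1" by (auto simp: cantor_rep_def split: if_splits)
    let ?h = "pair (\<lambda>_. 1) p"
    let ?g = "((\<lambda>w. 1) :: bool list \<Rightarrow> nat, closed_named p)"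
    have gh: "closed_game_rep ?h = Some ?g" by (simp add: closed_game_rep_def)
    have W: "Win ?g = {if p = (\<lambda>_. 0) then 1 else 2}"
    proof (cases "p = (\<lambda>_. 0)")
      case True
      then have A: "closed_named p = UNIV" by (simp add: closed_named_def)
      have "winning_strategy ?g 1 \<sigma>" for \<sigma> by (simp add: winning_strategy_def A)
      moreover have "\<not> winning_strategy ?g 2 \<sigma>" for \<sigma>
        unfolding winning_strategy_def A consistent_def by auto
      ultimately show ?thesis using True by (auto simp: Win_def)
    next
      case False
      then obtain n where "p n \<noteq> 0" by auto
      then have "p n = Suc (bw_encode [])" using p01 by (metis bw_encode.simps(1) le_SucE le_zero_eq One_nat_def)
      then have "cyl [] \<in> {cyl w | w. \<exists>n. p n = Suc (bw_encode w)}" by blast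
      moreover have "cyl [] = UNIV" by (simp add: cyl_def)
      ultimately have A: "closed_named p = {}" unfolding closed_named_def by blast
      have "winning_strategy ?g 2 \<sigma>" for \<sigma> by (simp add: winning_strategy_def A)
      moreover have "\<not> winning_strategy ?g 1 \<sigma>" for \<sigma>
      proof
        assume "winning_strategy ?g 1 \<sigma>"
        moreover have "consistent (\<lambda>w. 1) 1 \<sigma> (\<lambda>n. \<sigma> (playW \<sigma> n))"
          by (simp add: consistent_def playW_prefix)
        ultimately show False unfolding winning_strategy_def A by auto
      qed
      ultimately show ?thesis using False by (auto simp: Win_def)
    qed
    obtain r y where r: "G ?h = Some r" "player_rep r = Some y" "y \<in> Win ?g"
      using G gh W unfolding realizes_def by (metis empty_iff insertI1)
    have r0: "r 0 = (if p = (\<lambda>_. 0) then 1 else 2)" using r(2,3) W by (simp add: player_rep_def split: if_splits)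
    have res: "Option.bind (H1 p) (\<lambda>h. Option.bind (G h) (\<lambda>r. Kc (pair p r))) = Some (\<lambda>_. 2 - r 0)"
      using r(1) by (simp add: H1_def Kc_def pair_1)
    have "bit_rep (\<lambda>_. 2 - r 0) = Some (2 - r 0)" by (simp add: bit_rep_def r0)
    moreover have "2 - r 0 \<in> LPO x" by (simp add: LPO_def x r0)
    ultimately show "\<exists>q y. Option.bind (H1 p) (\<lambda>h. Option.bind (G h) (\<lambda>r. Kc (pair p r))) = Some q \<and>
      bit_rep q = Some y \<and> y \<in> LPO x" using res by blast
  qed
qed

theorem proposition10:
  shows "weihrauch_equiv closed_game_rep player_rep Win cantor_rep bit_rep LPO"
  unfolding weihrauch_equiv_def using Win_le_LPO LPO_le_Win by blast


end
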